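(* Let $N\geq 2$ and let $s_m,\sigma_x,\sigma_r,R_M$ be positive constants. Let $$\mathcal{D}=\{(s,x,y,S,\gamma)\in[s_m,+\infty)\times\mathbb{R}\times\mathbb{R}\times[s_m,+\infty)\times\mathbb{R}_+ \mid s_m<S\leq s_m e^{R_M},\ s_m<s\leq S\}.$$ Let $\mu_0$ be a probability measure on $\mathbb{R}^5$ whose support is included in the interior $\mathring{\mathcal{D}}$ of $\mathcal{D}$. Let $Z_N^0=(s_i^0,x_i,y_i,S_i,\gamma_i)_{1\leq i\leq N}$ be a random variable with distribution $\mu_0^{\otimes N}$ and let $t\mapsto (s_i(t,Z_N^0))_{1\leq i\leq N}$ be the solution on $\mathbb{R}_+$ of the system $$s_i(0)=s_i^0,\qquad \frac{\mathrm{d}s_i(t)}{\mathrm{d}t}=\gamma_i s_i(t)\left(\log\left(\frac{S_i}{s_m}\right)\left(1-\frac{1}{N-1}\sum_{j\neq i}C(s_i(t),s_j(t),|\vec x_i-\vec x_j|)\right)-\log\left(\frac{s_i(t)}{s_m}\right)\right),$$ where $\vec x_i=(x_i,y_i)$ and $C(s_i,s_j,d)=\frac{\log(s_j/s_m)}{2R_M(1+d^2/\sigma_x^2)}\left(1+\tanh\left(\frac{1}{\sigma_r}\log\frac{s_j}{s_i}\right)\right)$. Then almost surely, for all $t\in\mathbb{R}_+$, $(s_i(t,Z_N^0),x_i,y_i,S_i,\gamma_i)_{1\leq i\leq N}\in\mathring{\mathcal{D}}^N$.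
   Context: $|\vec x_i-\vec x_j|$ is the Euclidean distance in $\mathbb{R}^2$. $\mathring{\mathcal{D}}^N$ denotes the $N$-fold product of the interior of $\mathcal{D}$. *)

theory Defs
  imports "HOL-Probability.Probability"
begin

type_synonym pt5 = "real \<times> real \<times> real \<times> real \<times> real"

definition domD :: "real \<Rightarrow> real \<Rightarrow> pt5 set" where
  "domD sm RM = {(s, x, y, S, g). s \<ge> sm \<and> S \<ge> sm \<and> g \<ge> 0 \<and>
      sm < S \<and> S \<le> sm * exp RM \<and> sm < s \<and> s \<le> S}"

definition measure_support :: "'a::topological_space measure \<Rightarrow> 'a set" where
  "measure_support \<mu> = {z. \<forall>U. open U \<longrightarrow> z \<in> U \<longrightarrow> emeasure \<mu> U \<noteq> 0}"

definition Ckern :: "real \<Rightarrow> real \<Rightarrow> real \<Rightarrow> real \<Rightarrow> real \<Rightarrow> real \<Rightarrow> real \<Rightarrow> real" where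
  "Ckern sm sx sr RM si sj d =
     ln (sj / sm) / (2 * RM * (1 + d\<^sup>2 / sx\<^sup>2)) * (1 + tanh ((1 / sr) * ln (sj / si)))"

definition rhs :: "nat \<Rightarrow> real \<Rightarrow> real \<Rightarrow> real \<Rightarrow> real \<Rightarrow> (nat \<Rightarrow> pt5) \<Rightarrow> (nat \<Rightarrow> real) \<Rightarrow> nat \<Rightarrow> real" where
  "rhs N sm sx sr RM z u i =
    (let (s0i, xi, yi, Si, gi) = z i in
     gi * u i * (ln (Si / sm) *
        (1 - (1 / (real N - 1)) *
           (\<Sum>j\<in>{..<N} - {i}. let (s0j, xj, yj, Sj, gj) = z j in
              Ckern sm sx sr RM (u i) (u j) (dist (xi, yi) (xj, yj))))
        - ln (u i / sm)))"

text \<open>sol is a solution on R_+ (= [0,inf)) of the system with data z: the sizes stay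
  positive (domain of the logarithms), start at s_i^0 and satisfy the ODE.\<close>
definition is_solution :: "nat \<Rightarrow> real \<Rightarrow> real \<Rightarrow> real \<Rightarrow> real \<Rightarrow> (nat \<Rightarrow> pt5) \<Rightarrow> (real \<Rightarrow> nat \<Rightarrow> real) \<Rightarrow> bool" where
  "is_solution N sm sx sr RM z sol \<longleftrightarrow>
     (\<forall>i<N. sol 0 i = fst (z i)) \<and>
     (\<forall>t\<ge>0. \<forall>i<N. sol t i > 0) \<and>
     (\<forall>t\<ge>0. \<forall>i<N. ((\<lambda>\<tau>. sol \<tau> i) has_real_derivative rhs N sm sx sr RM z (sol t) i)
                      (at t within {0..}))"

end

theory Submission imports Defs begin
lemma supp_AE:
  fixes \<mu> :: "pt5 measure"
  assumes "sets \<mu> = sets borel"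
  shows "AE x in \<mu>. x \<in> measure_support \<mu>"
proof -
  define F where "F = {U::pt5 set. open U \<and> emeasure \<mu> U = 0}"
  have "\<And>S. S \<in> F \<Longrightarrow> open S" unfolding F_def by blast
  then obtain F' where F': "F' \<subseteq> F" "countable F'" "\<Union>F' = \<Union>F"
    using Lindelof by metis
  have "(\<Union>U\<in>F'. U) \<in> null_sets \<mu>"
  proof (rule null_sets_UN')
    show "countable F'" by fact
    fix U assume "U \<in> F'"
    then have "open U" "emeasure \<mu> U = 0" using F' unfolding F_def by auto
    moreover have "U \<in> sets \<mu>" using assms borel_open[OF \<open>open U\<close>] by simp
    ultimately show "U \<in> null_sets \<mu>" by (blast intro: null_setsI)
  qed
  moreover have "{x \<in> space \<mu>. x \<notin> measure_support \<mu>} \<subseteq> (\<Union>U\<in>F'. U)"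
  proof
    fix x assume "x \<in> {x \<in> space \<mu>. x \<notin> measure_support \<mu>}"
    then obtain U where "open U" "x \<in> U" "emeasure \<mu> U = 0"
      unfolding measure_support_def by blast
    then have "x \<in> \<Union>F" unfolding F_def by blast
    then show "x \<in> (\<Union>U\<in>F'. U)" using F'(3) by simp
  qed
  ultimately show ?thesis by (rule AE_I')
qed

lemma interior_domD_sup:
  assumes "sm < s" "s < S" "S < sm * exp RM" "g > 0"
  shows "(s, x, y, S, g) \<in> interior (domD sm RM)"
proof -
  define Op where "Op = {p::pt5. sm < fst p} \<inter> {p. fst p < fst (snd (snd (snd p)))} \<inter>
      {p. fst (snd (snd (snd p))) < sm * exp RM} \<inter> {p. 0 < snd (snd (snd (snd p)))}"
  have c1: "continuous_on UNIV (\<lambda>p::pt5. fst p)" by (rule continuous_on_fst[OF continuous_on_id])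
  have c2: "continuous_on UNIV (\<lambda>p::pt5. fst (snd (snd (snd p))))"
    by (intro continuous_on_fst continuous_on_snd continuous_on_id)
  have c3: "continuous_on UNIV (\<lambda>p::pt5. snd (snd (snd (snd p))))"
    by (intro continuous_on_snd continuous_on_id)
  have "open Op" unfolding Op_def
    by (intro open_Int open_Collect_less c1 c2 c3 continuous_on_const)
  moreover have "Op \<subseteq> domD sm RM" unfolding Op_def domD_def by auto
  ultimately have "Op \<subseteq> interior (domD sm RM)" by (metis interior_maximal)
  moreover have "(s, x, y, S, g) \<in> Op" using assms unfolding Op_def by auto
  ultimately show ?thesis by blast
qed
lemma interior_domD_sub:
  assumes "(s, x, y, S, g) \<in> interior (domD sm RM)"
  shows "sm < s \<and> s < S \<and> S < sm * exp RM \<and> g > 0"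
proof -
  obtain e where e: "e > 0" "ball (s, x, y, S, g) e \<subseteq> domD sm RM"
    using assms mem_interior by blast
  have "(s + e/2, x, y, S, g) \<in> domD sm RM"
    using e by (intro subsetD[OF e(2)]) (simp add: dist_Pair_Pair dist_real_def)
  moreover have "(s, x, y, S + e/2, g) \<in> domD sm RM"
    using e by (intro subsetD[OF e(2)]) (simp add: dist_Pair_Pair dist_real_def)
  moreover have "(s, x, y, S, g - e/2) \<in> domD sm RM"
    using e by (intro subsetD[OF e(2)]) (simp add: dist_Pair_Pair dist_real_def)
  moreover have "(s, x, y, S, g) \<in> domD sm RM"
    using assms interior_subset by blast
  ultimately show ?thesis using e(1) unfolding domD_def by auto
qed
lemma Ck_bounds:
  assumes "sm > 0" "RM > 0" "sm \<le> b" "b \<le> sm * exp RM"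
  shows "0 \<le> Ckern sm sx sr RM a b d" "Ckern sm sx sr RM a b d < 1"
    and "sm < b \<Longrightarrow> 0 < Ckern sm sx sr RM a b d"
proof -
  define L where "L = ln (b / sm)"
  define den where "den = 2 * RM * (1 + d\<^sup>2 / sx\<^sup>2)"
  define c where "c = 1 + tanh ((1 / sr) * ln (b / a))"
  have C: "Ckern sm sx sr RM a b d = L / den * c"
    unfolding Ckern_def L_def den_def c_def by simp
  have L0: "0 \<le> L" unfolding L_def using assms by simp
  have "b / sm \<le> exp RM" using assms by (simp add: divide_le_eq mult.commute)
  then have L1: "L \<le> RM" unfolding L_def using assms
    by (metis divide_pos_pos less_le_trans ln_exp ln_le_cancel_iff order_less_le_trans exp_gt_zero assms(1) le_less)
  have "d\<^sup>2 / sx\<^sup>2 \<ge> 0" by simp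
  then have den: "den \<ge> 2 * RM" unfolding den_def using assms(2) by simp
  have c0: "0 < c" "c < 2" unfolding c_def using tanh_real_lt_1 tanh_real_gt_neg1 by (auto simp: add.commute) (smt (verit) tanh_real_gt_neg1)+
  have dpos: "den > 0" using den assms(2) by linarith
  have q0: "0 \<le> L / den" using L0 dpos by simp
  have q1: "L / den \<le> 1/2" using L1 den dpos assms(2) by (simp add: divide_le_eq)
  show "0 \<le> Ckern sm sx sr RM a b d" unfolding C using q0 c0 by (intro mult_nonneg_nonneg) auto
  have "L / den * c \<le> 1/2 * c" using q1 c0 by (intro mult_right_mono) auto
  then show "Ckern sm sx sr RM a b d < 1" unfolding C using c0 by linarith
  assume "sm < b"
  then have "0 < L" unfolding L_def using assms by simp
  then show "0 < Ckern sm sx sr RM a b d" unfolding C using dpos c0 by simp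
qed

lemma rhs_eq:
  "rhs N sm sx sr RM z u i =
    snd (snd (snd (snd (z i)))) * u i * (ln (fst (snd (snd (snd (z i)))) / sm) *
      (1 - (1 / (real N - 1)) * (\<Sum>j\<in>{..<N} - {i}.
         Ckern sm sx sr RM (u i) (u j) (dist (fst (snd (z i)), fst (snd (snd (z i)))) (fst (snd (z j)), fst (snd (snd (z j)))))))
      - ln (u i / sm))"
  unfolding rhs_def by (simp add: Let_def case_prod_beta)

lemma avg_bounds:
  assumes "N \<ge> 2" "i < N" "sm > 0" "RM > 0"
    and "\<forall>j<N. sm \<le> u j \<and> u j \<le> sm * exp RM"
  shows "0 \<le> (1 / (real N - 1)) * (\<Sum>j\<in>{..<N} - {i}. Ckern sm sx sr RM (u i) (u j) (D j))"
    and "(1 / (real N - 1)) * (\<Sum>j\<in>{..<N} - {i}. Ckern sm sx sr RM (u i) (u j) (D j)) < 1"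
    and "\<forall>j<N. sm < u j \<Longrightarrow> 0 < (1 / (real N - 1)) * (\<Sum>j\<in>{..<N} - {i}. Ckern sm sx sr RM (u i) (u j) (D j))"
proof -
  define K where "K = {..<N} - {i}"
  have fK: "finite K" unfolding K_def by simp
  have cK: "card K = N - 1" unfolding K_def using assms(2) by simp
  have cKr: "real (card K) = real N - 1" using cK assms(1) by simp
  have "card K \<noteq> 0" using cK assms(1) by simp
  then have neK: "K \<noteq> {}" by auto
  have pos: "real N - 1 > 0" using assms(1) by simp
  have b: "\<And>j. j \<in> K \<Longrightarrow> 0 \<le> Ckern sm sx sr RM (u i) (u j) (D j) \<and> Ckern sm sx sr RM (u i) (u j) (D j) < 1"
    using Ck_bounds assms(3,4,5) unfolding K_def by auto
  have s0: "0 \<le> (\<Sum>j\<in>K. Ckern sm sx sr RM (u i) (u j) (D j))" using b by (simp add: sum_nonneg)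
  have "(\<Sum>j\<in>K. Ckern sm sx sr RM (u i) (u j) (D j)) < (\<Sum>j\<in>K. 1)"
    using b fK neK by (intro sum_strict_mono) auto
  then have s1: "(\<Sum>j\<in>K. Ckern sm sx sr RM (u i) (u j) (D j)) < real N - 1" using cKr by simp
  show "0 \<le> (1 / (real N - 1)) * (\<Sum>j\<in>{..<N} - {i}. Ckern sm sx sr RM (u i) (u j) (D j))"
    using s0 pos unfolding K_def by simp
  show "(1 / (real N - 1)) * (\<Sum>j\<in>{..<N} - {i}. Ckern sm sx sr RM (u i) (u j) (D j)) < 1"
    using s1 pos unfolding K_def by (simp add: divide_less_eq)
  assume a: "\<forall>j<N. sm < u j"
  have "0 < (\<Sum>j\<in>K. Ckern sm sx sr RM (u i) (u j) (D j))"
    using fK neK Ck_bounds(3) assms(3,4,5) a unfolding K_def by (intro sum_pos) auto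
  then show "0 < (1 / (real N - 1)) * (\<Sum>j\<in>{..<N} - {i}. Ckern sm sx sr RM (u i) (u j) (D j))"
    using pos unfolding K_def by simp
qed
lemma ode_inside:
  assumes N2: "N \<ge> 2" and sm0: "sm > 0" and RM0: "RM > 0"
    and zin: "\<forall>i<N. sm < fst (z i) \<and> fst (z i) < fst (snd (snd (snd (z i)))) \<and>
                fst (snd (snd (snd (z i)))) < sm * exp RM \<and> 0 < snd (snd (snd (snd (z i))))"
    and sol: "is_solution N sm sx sr RM z sol"
  shows "\<forall>t\<ge>0. \<forall>i<N. sm < sol t i \<and> sol t i < fst (snd (snd (snd (z i))))"
proof (rule ccontr)
  define Sc where "Sc i = fst (snd (snd (snd (z i))))" for i
  define gc where "gc i = snd (snd (snd (snd (z i))))" for i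
  define Dd where "Dd i j = dist (fst (snd (z i)), fst (snd (snd (z i)))) (fst (snd (z j)), fst (snd (snd (z j))))" for i j
  define A where "A t i = (1 / (real N - 1)) * (\<Sum>j\<in>{..<N} - {i}. Ckern sm sx sr RM (sol t i) (sol t j) (Dd i j))" for t i
  have rhsE: "rhs N sm sx sr RM z (sol t) i = gc i * sol t i * (ln (Sc i / sm) * (1 - A t i) - ln (sol t i / sm))" for t i
    unfolding rhs_eq Sc_def gc_def A_def Dd_def by simp
  have init: "\<forall>i<N. sol 0 i = fst (z i)" and der: "\<forall>t\<ge>0. \<forall>i<N. ((\<lambda>\<tau>. sol \<tau> i) has_real_derivative rhs N sm sx sr RM z (sol t) i) (at t within {0..})"
    using sol unfolding is_solution_def by auto
  have cont: "continuous_on {0..} (\<lambda>\<tau>. sol \<tau> i)" if "i < N" for i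
    unfolding continuous_on_eq_continuous_within
    using der that by (auto intro: DERIV_continuous)
  assume "\<not> (\<forall>t\<ge>0. \<forall>i<N. sm < sol t i \<and> sol t i < fst (snd (snd (snd (z i)))))"
  then obtain t0 i0 where t0: "t0 \<ge> 0" "i0 < N" "sol t0 i0 \<le> sm \<or> Sc i0 \<le> sol t0 i0"
    unfolding Sc_def by force
  define B where "B = {t. 0 \<le> t \<and> (\<exists>i<N. sol t i \<le> sm \<or> Sc i \<le> sol t i)}"
  have Beq: "B = (\<Union>i\<in>{..<N}. {0..} \<inter> (\<lambda>\<tau>. sol \<tau> i) -` ({..sm} \<union> {Sc i..}))"
    unfolding B_def by auto
  have "closed B" unfolding Beq
    by (intro closed_UN finite_lessThan ballI continuous_closed_preimage cont closed_Un closed_atMost closed_atLeast closed_atLeast) auto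
  moreover have "B \<noteq> {}" using t0 unfolding B_def by auto
  moreover have "bdd_below B" unfolding B_def by (rule bdd_belowI[of _ 0]) auto
  ultimately have TB: "Inf B \<in> B" by (rule closed_contains_Inf[rotated 2])
  define T where "T = Inf B"
  have T0: "T \<ge> 0" using TB unfolding T_def B_def by auto
  have below: "sm < sol t i \<and> sol t i < Sc i" if "0 \<le> t" "t < T" "i < N" for t i
  proof (rule ccontr)
    assume "\<not> (sm < sol t i \<and> sol t i < Sc i)"
    then have "t \<in> B" unfolding B_def using that by force
    then have "T \<le> t" unfolding T_def using \<open>bdd_below B\<close> by (rule cInf_lower)
    then show False using that by simp
  qed
  have Tpos: "T > 0"
  proof (rule ccontr)
    assume "\<not> T > 0"
    then have "T = 0" using T0 by simp
    then obtain i where "i < N" "sol 0 i \<le> sm \<or> Sc i \<le> sol 0 i" using TB unfolding T_def B_def by auto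
    then show False using init zin unfolding Sc_def by force
  qed
  have contT: "continuous_on {0..T} (\<lambda>\<tau>. sol \<tau> j)" if "j < N" for j
    using cont[OF that] by (rule continuous_on_subset) auto
  have cb: "sm \<le> sol T j \<and> sol T j \<le> Sc j" if j: "j < N" for j
  proof
    show "sm \<le> sol T j"
    proof (rule ccontr)
      assume "\<not> sm \<le> sol T j"
      moreover have "sm \<le> sol 0 j" using init zin j by force
      ultimately obtain x where "0 \<le> x" "x \<le> T" "sol x j = sm"
        using IVT2'[of "\<lambda>\<tau>. sol \<tau> j" T sm 0] T0 contT[OF j] by auto
      moreover have "x \<noteq> T" using \<open>\<not> sm \<le> sol T j\<close> \<open>sol x j = sm\<close> by auto
      ultimately show False using below[of x j] j by auto
    qed
    show "sol T j \<le> Sc j"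
    proof (rule ccontr)
      assume "\<not> sol T j \<le> Sc j"
      moreover have "sol 0 j \<le> Sc j" using init zin j unfolding Sc_def by force
      ultimately obtain x where "0 \<le> x" "x \<le> T" "sol x j = Sc j"
        using IVT'[of "\<lambda>\<tau>. sol \<tau> j" 0 "Sc j" T] T0 contT[OF j] by auto
      moreover have "x \<noteq> T" using \<open>\<not> sol T j \<le> Sc j\<close> \<open>sol x j = Sc j\<close> by auto
      ultimately show False using below[of x j] j by auto
    qed
  qed
  have ub: "\<forall>j<N. sm \<le> sol T j \<and> sol T j \<le> sm * exp RM"
    using cb zin unfolding Sc_def by (meson less_imp_le order_trans)
  have nobot: "sol T j \<noteq> sm" if j: "j < N" for j
  proof
    assume eq: "sol T j = sm"
    have A1: "A T j < 1" unfolding A_def by (rule avg_bounds(2)[OF N2 j sm0 RM0 ub])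
    have "sm < Sc j" using zin j unfolding Sc_def by force
    then have "1 < Sc j / sm" using sm0 by (simp add: less_divide_eq)
    then have L: "ln (Sc j / sm) > 0" by (rule ln_gt_zero)
    have g: "gc j > 0" using zin j unfolding gc_def by simp
    have "rhs N sm sx sr RM z (sol T) j = gc j * sm * (ln (Sc j / sm) * (1 - A T j))"
      unfolding rhsE eq using sm0 by simp
    also have "\<dots> > 0" using A1 L g sm0 by simp
    finally have pos: "rhs N sm sx sr RM z (sol T) j > 0" .
    obtain d where d: "d > 0" "\<forall>h>0. T - h \<in> {0..} \<longrightarrow> h < d \<longrightarrow> sol (T - h) j < sol T j"
      using has_real_derivative_pos_inc_left[OF der[rule_format, OF T0 j] pos] by blast
    define h where "h = min d T / 2"
    have "h > 0" "h < d" "T - h \<ge> 0" "T - h < T" using d Tpos unfolding h_def by auto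
    then have "sol (T - h) j < sm" using d eq by auto
    moreover have "sm < sol (T - h) j" using below[of "T - h" j] j \<open>T - h \<ge> 0\<close> \<open>T - h < T\<close> by auto
    ultimately show False by simp
  qed
  obtain i where i: "i < N" "sol T i \<le> sm \<or> Sc i \<le> sol T i" using TB unfolding T_def B_def by auto
  have allgt: "\<forall>j<N. sm < sol T j" using cb nobot by (metis order_le_neq_trans)
  have eqS: "sol T i = Sc i" using i cb[OF i(1)] nobot[OF i(1)] by linarith
  have A0: "A T i > 0" unfolding A_def by (rule avg_bounds(3)[OF N2 i(1) sm0 RM0 ub allgt])
  have "sm < Sc i" using zin i(1) unfolding Sc_def by force
    then have "1 < Sc i / sm" using sm0 by (simp add: less_divide_eq)
    then have L: "ln (Sc i / sm) > 0" by (rule ln_gt_zero)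
  have g: "gc i > 0" using zin i unfolding gc_def by simp
  have Sp: "Sc i > 0" using zin i sm0 unfolding Sc_def by force
  have "rhs N sm sx sr RM z (sol T) i = - (gc i * Sc i * ln (Sc i / sm) * A T i)"
    unfolding rhsE eqS by (simp add: algebra_simps)
  also have "\<dots> < 0" using A0 L g Sp by simp
  finally have neg: "rhs N sm sx sr RM z (sol T) i < 0" .
  obtain d where d: "d > 0" "\<forall>h>0. T - h \<in> {0..} \<longrightarrow> h < d \<longrightarrow> sol T i < sol (T - h) i"
    using has_real_derivative_neg_dec_left[OF der[rule_format, OF T0 i(1)] neg] by blast
  define h where "h = min d T / 2"
  have "h > 0" "h < d" "T - h \<ge> 0" "T - h < T" using d Tpos unfolding h_def by auto
  then have "Sc i < sol (T - h) i" using d eqS by auto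
  moreover have "sol (T - h) i < Sc i" using below[of "T - h" i] i \<open>T - h \<ge> 0\<close> \<open>T - h < T\<close> by auto
  ultimately show False by simp
qed
lemma zin_of:
  assumes "p \<in> interior (domD sm RM)"
  shows "sm < fst p \<and> fst p < fst (snd (snd (snd p))) \<and>
         fst (snd (snd (snd p))) < sm * exp RM \<and> 0 < snd (snd (snd (snd p)))"
  using assms interior_domD_sub by (cases p) auto

theorem proposition2:
  fixes N :: nat and sm sx sr RM :: real
    and \<mu>0 :: "pt5 measure" and M :: "'w measure" and Z :: "'w \<Rightarrow> nat \<Rightarrow> pt5"
  assumes "N \<ge> 2" and "sm > 0" and "sx > 0" and "sr > 0" and "RM > 0"
    and "prob_space \<mu>0" and "sets \<mu>0 = sets borel"
    and "measure_support \<mu>0 \<subseteq> interior (domD sm RM)"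
    and "prob_space M"
    and "Z \<in> measurable M (PiM {..<N} (\<lambda>_. \<mu>0))"
    and "distr M (PiM {..<N} (\<lambda>_. \<mu>0)) Z = PiM {..<N} (\<lambda>_. \<mu>0)"
  shows "AE \<omega> in M. \<forall>sol. is_solution N sm sx sr RM (Z \<omega>) sol \<longrightarrow>
           (\<forall>t\<ge>0. \<forall>i<N. (case Z \<omega> i of (s0, x, y, S, g) \<Rightarrow> (sol t i, x, y, S, g))
                            \<in> interior (domD sm RM))"
proof -
  have ae0: "AE x in \<mu>0. x \<in> measure_support \<mu>0" using supp_AE[OF assms(7)] .
  have "AE z in PiM {..<N} (\<lambda>_. \<mu>0). \<forall>i\<in>{..<N}. z i \<in> measure_support \<mu>0"
    by (intro AE_finite_allI finite_lessThan AE_PiM_component[where P = "\<lambda>x. x \<in> measure_support \<mu>0"] assms(6) ae0)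
  then have "AE z in distr M (PiM {..<N} (\<lambda>_. \<mu>0)) Z. \<forall>i\<in>{..<N}. z i \<in> measure_support \<mu>0"
    using \<open>AE z in PiM {..<N} (\<lambda>_. \<mu>0). \<forall>i\<in>{..<N}. z i \<in> measure_support \<mu>0\<close>
    by (subst assms(11))
  then have "AE \<omega> in M. \<forall>i\<in>{..<N}. Z \<omega> i \<in> measure_support \<mu>0"
    by (rule AE_distrD[OF assms(10)])
  then show ?thesis
  proof (rule eventually_mono)
    fix \<omega> assume H: "\<forall>i\<in>{..<N}. Z \<omega> i \<in> measure_support \<mu>0"
    have zin: "\<forall>i<N. sm < fst (Z \<omega> i) \<and> fst (Z \<omega> i) < fst (snd (snd (snd (Z \<omega> i)))) \<and>
                fst (snd (snd (snd (Z \<omega> i)))) < sm * exp RM \<and> 0 < snd (snd (snd (snd (Z \<omega> i))))"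
      using H assms(8) zin_of by blast
    show "\<forall>sol. is_solution N sm sx sr RM (Z \<omega>) sol \<longrightarrow>
           (\<forall>t\<ge>0. \<forall>i<N. (case Z \<omega> i of (s0, x, y, S, g) \<Rightarrow> (sol t i, x, y, S, g))
                            \<in> interior (domD sm RM))"
    proof (intro allI impI)
      fix sol and t :: real and i :: nat assume sol: "is_solution N sm sx sr RM (Z \<omega>) sol" and t: "0 \<le> t" and i: "i < N"
      have b: "sm < sol t i \<and> sol t i < fst (snd (snd (snd (Z \<omega> i))))"
        using ode_inside[OF assms(1,2,5) zin sol] t i by blast
      obtain a b1 c d e where Zi: "Z \<omega> i = (a, b1, c, d, e)" by (cases "Z \<omega> i") blast
      show "(case Z \<omega> i of (s0, x, y, S, g) \<Rightarrow> (sol t i, x, y, S, g)) \<in> interior (domD sm RM)"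
        using b zin[rule_format, OF i] unfolding Zi by (auto intro!: interior_domD_sup)
    qed
  qed
qed
end
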